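(* Let $X$ be a space and consider: (1) $\mathsf{EC}(X,\mathbb{R})$ holds; (2) $\mathsf{EC}(X,Y)$ holds for every metric space $Y$; (3a) $X$ satisfies $\mathsf{I0}$; (3b) the intersection of any two non-Lindelöf $0$-sets of $X$ is non-Lindelöf; (4a) $X$ satisfies $\mathsf{IC}$; (4b) the intersection of any two closed non-Lindelöf subsets of $X$ is non-Lindelöf. Then (1)$\Leftrightarrow$(2)$\Leftrightarrow$(3a)$\Leftarrow$(3b)$\Leftarrow$(4a)$\Leftrightarrow$(4b). Moreover, if $X$ is Tychonoff then (3a)$\Leftrightarrow$(3b), and if $X$ is normal then all six properties are equivalent.
   Context: All spaces are Hausdorff and maps continuous. For a non-Lindelöf space $X$ and a space $Y$, $\mathsf{EC}(X,Y)$ means: for every continuous $f:X\to Y$ there is a Lindelöf $Z\subset X$ such that $f(X\setminus Z)$ is a singleton (for Lindelöf $X$ the property is regarded as trivially true). A $0$-set of $X$ is a set $g^{-1}(\{0\})$ for some continuous $g:X\to[0,1]$. $X$ satisfies $\mathsf{IC}$ (resp. $\mathsf{I0}$) if of any two disjoint closed subsets (resp. $0$-sets) of $X$ at least one is Lindelöf. *)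

theory Defs
  imports "HOL-Analysis.Analysis"
begin

definition Lindelof_subset :: "'a topology \<Rightarrow> 'a set \<Rightarrow> bool" where
  "Lindelof_subset X Z \<longleftrightarrow> Z \<subseteq> topspace X \<and> Lindelof_space (subtopology X Z)"

definition EC :: "'a topology \<Rightarrow> 'b topology \<Rightarrow> bool" where
  "EC X Y \<longleftrightarrow> (Lindelof_space X \<or>
     (\<forall>f. continuous_map X Y f \<longrightarrow>
        (\<exists>Z. Lindelof_subset X Z \<and> (\<exists>y. f ` (topspace X - Z) = {y}))))"

definition zero_set :: "'a topology \<Rightarrow> 'a set \<Rightarrow> bool" where
  "zero_set X S \<longleftrightarrow> (\<exists>g. continuous_map X (subtopology euclideanreal {0..1}) g \<and>
                           S = {x \<in> topspace X. g x = 0})"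

definition IC :: "'a topology \<Rightarrow> bool" where
  "IC X \<longleftrightarrow> (\<forall>A B. closedin X A \<and> closedin X B \<and> A \<inter> B = {} \<longrightarrow>
                 Lindelof_subset X A \<or> Lindelof_subset X B)"

definition I0 :: "'a topology \<Rightarrow> bool" where
  "I0 X \<longleftrightarrow> (\<forall>A B. zero_set X A \<and> zero_set X B \<and> A \<inter> B = {} \<longrightarrow>
                 Lindelof_subset X A \<or> Lindelof_subset X B)"

definition zero_sets_meet :: "'a topology \<Rightarrow> bool" where
  "zero_sets_meet X \<longleftrightarrow> (\<forall>A B. zero_set X A \<and> zero_set X B \<and>
       \<not> Lindelof_subset X A \<and> \<not> Lindelof_subset X B \<longrightarrow> \<not> Lindelof_subset X (A \<inter> B))"

definition closed_sets_meet :: "'a topology \<Rightarrow> bool" where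
  "closed_sets_meet X \<longleftrightarrow> (\<forall>A B. closedin X A \<and> closedin X B \<and>
       \<not> Lindelof_subset X A \<and> \<not> Lindelof_subset X B \<longrightarrow> \<not> Lindelof_subset X (A \<inter> B))"

end

theory Submission
  imports Defs
begin

lemma Lsub_empty: "Lindelof_subset X {}"
  unfolding Lindelof_subset_def by (simp add: Lindelof_space_topspace_empty)

lemma Lsub_space: "Lindelof_subset X (topspace X) \<longleftrightarrow> Lindelof_space X"
  unfolding Lindelof_subset_def by simp

lemma Lsub_closed_subset:
  assumes "Lindelof_subset X A" "closedin X C" "C \<subseteq> A"
  shows "Lindelof_subset X C"
proof -
  have "closedin (subtopology X A) C"
    unfolding closedin_subtopology using assms by blast
  then have "Lindelof_space (subtopology (subtopology X A) C)"
    using assms Lindelof_space_closedin_subtopology unfolding Lindelof_subset_def by blast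
  then show ?thesis using assms unfolding Lindelof_subset_def
    by (simp add: subtopology_subtopology inf.absorb2 closedin_subset)
qed

lemma Lsub_closed_space:
  assumes "Lindelof_space X" "closedin X C"
  shows "Lindelof_subset X C"
proof (rule Lsub_closed_subset[of X "topspace X" C])
  show "Lindelof_subset X (topspace X)" using assms(1) by (simp add: Lsub_space)
qed (use assms closedin_subset in auto)

lemma Lsub_UN:
  assumes "countable I" "\<And>i. i \<in> I \<Longrightarrow> Lindelof_subset X (Z i)"
  shows "Lindelof_subset X (\<Union>i\<in>I. Z i)"
  using assms Lindelof_space_Union[of "Z ` I" X] unfolding Lindelof_subset_def by auto

lemma Lsub_Un:
  assumes "Lindelof_subset X A" "Lindelof_subset X B"
  shows "Lindelof_subset X (A \<union> B)"
proof -
  have "Lindelof_subset X (\<Union>i\<in>{True,False}. if i then A else B)"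
    by (rule Lsub_UN) (use assms in auto)
  then show ?thesis by (simp add: Un_commute)
qed

lemma Lsub_cover:
  assumes "Lindelof_subset X Z" "\<And>U. U \<in> \<U> \<Longrightarrow> openin X U" "Z \<subseteq> \<Union>\<U>"
  shows "\<exists>V. countable V \<and> V \<subseteq> \<U> \<and> Z \<subseteq> \<Union>V"
proof -
  have z: "Z \<subseteq> topspace X" and l: "Lindelof_space (subtopology X Z)" using assms(1) unfolding Lindelof_subset_def by auto
  have "\<forall>\<U>. (\<forall>U \<in> \<U>. openin X U) \<and> Z \<subseteq> \<Union>\<U> \<longrightarrow> (\<exists>V. countable V \<and> V \<subseteq> \<U> \<and> Z \<subseteq> \<Union>V)"
    using l unfolding Lindelof_space_subtopology_subset[OF z] .
  then show ?thesis using assms(2,3) by simp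
qed

lemma Lsub_coverI:
  assumes "Z \<subseteq> topspace X"
    "\<And>\<U>. (\<And>U. U \<in> \<U> \<Longrightarrow> openin X U) \<Longrightarrow> Z \<subseteq> \<Union>\<U> \<Longrightarrow> \<exists>V. countable V \<and> V \<subseteq> \<U> \<and> Z \<subseteq> \<Union>V"
  shows "Lindelof_subset X Z"
proof -
  have "Lindelof_space (subtopology X Z)"
    unfolding Lindelof_space_subtopology_subset[OF assms(1)] using assms(2) by simp
  then show ?thesis using assms(1) unfolding Lindelof_subset_def by simp
qed

lemma Lspace_if_covered:
  assumes "Lindelof_subset X Z" "topspace X \<subseteq> Z"
  shows "Lindelof_space X"
proof -
  have "Z = topspace X" using assms unfolding Lindelof_subset_def by blast
  then show ?thesis using assms unfolding Lindelof_subset_def by simp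
qed

lemma zero_set_real:
  assumes "zero_set X S"
  obtains g where "continuous_map X euclideanreal g" "\<And>x. x \<in> topspace X \<Longrightarrow> 0 \<le> g x \<and> g x \<le> 1"
    "S = {x \<in> topspace X. g x = 0}"
proof -
  obtain g where "continuous_map X euclideanreal g" "g \<in> topspace X \<rightarrow> {0..1}" "S = {x \<in> topspace X. g x = 0}"
    using assms unfolding zero_set_def continuous_map_in_subtopology by auto
  then show ?thesis using that by (auto simp: Pi_iff)
qed

lemma zero_set_closed: "zero_set X S \<Longrightarrow> closedin X S"
proof -
  assume "zero_set X S"
  then obtain g where g: "continuous_map X euclideanreal g" "S = {x \<in> topspace X. g x = 0}"
    by (metis zero_set_real)
  have "closedin X {x \<in> topspace X. g x \<in> {0}}"
    by (rule closedin_continuous_map_preimage[OF g(1)]) simp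
  then show ?thesis using g(2) by simp
qed

lemma zero_setI:
  assumes "continuous_map X euclideanreal g" "\<And>x. x \<in> topspace X \<Longrightarrow> 0 \<le> g x \<and> g x \<le> 1"
  shows "zero_set X {x \<in> topspace X. g x = 0}"
  unfolding zero_set_def
  by (rule exI[of _ g]) (use assms in \<open>auto simp: continuous_map_in_subtopology\<close>)

lemma EC_D:
  assumes "EC X Y" "\<not> Lindelof_space X" "continuous_map X Y f"
  obtains Z y where "Lindelof_subset X Z" "\<And>x. x \<in> topspace X \<Longrightarrow> x \<notin> Z \<Longrightarrow> f x = y"
    "topspace X - Z \<noteq> {}"
proof -
  obtain Z y where "Lindelof_subset X Z" "f ` (topspace X - Z) = {y}"
    using assms unfolding EC_def by blast
  then show ?thesis using that by blast
qed

lemma EC_I: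
  assumes "\<not> Lindelof_space X \<Longrightarrow> (\<And>f. continuous_map X Y f \<Longrightarrow>
     \<exists>Z y. Lindelof_subset X Z \<and> (\<forall>x \<in> topspace X. x \<notin> Z \<longrightarrow> f x = y))"
  shows "EC X Y"
  unfolding EC_def
proof (cases "Lindelof_space X")
  case False
  show "Lindelof_space X \<or> (\<forall>f. continuous_map X Y f \<longrightarrow> (\<exists>Z. Lindelof_subset X Z \<and> (\<exists>y. f ` (topspace X - Z) = {y})))"
  proof (rule disjI2, intro allI impI)
    fix f assume f: "continuous_map X Y f"
    then obtain Z y where Z: "Lindelof_subset X Z" "\<forall>x \<in> topspace X. x \<notin> Z \<longrightarrow> f x = y"
      using assms False by blast
    have "topspace X - Z \<noteq> {}"
      using Lspace_if_covered[OF Z(1)] False by blast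
    then have "f ` (topspace X - Z) = {y}" using Z(2) by auto
    then show "\<exists>Z. Lindelof_subset X Z \<and> (\<exists>y. f ` (topspace X - Z) = {y})" using Z(1) by blast
  qed
qed simp



lemma EC_imp_I0: assumes "EC X euclideanreal" shows "I0 X"
  unfolding I0_def
proof (intro allI impI)
  fix A B assume H: "zero_set X A \<and> zero_set X B \<and> A \<inter> B = {}"
  show "Lindelof_subset X A \<or> Lindelof_subset X B"
  proof (cases "Lindelof_space X")
    case True then show ?thesis using Lsub_closed_space zero_set_closed H by blast
  next
    case False
    obtain ga where ga: "continuous_map X euclideanreal ga" "\<And>x. x \<in> topspace X \<Longrightarrow> 0 \<le> ga x \<and> ga x \<le> 1"
      "A = {x \<in> topspace X. ga x = 0}" using H zero_set_real by metis
    obtain gb where gb: "continuous_map X euclideanreal gb" "\<And>x. x \<in> topspace X \<Longrightarrow> 0 \<le> gb x \<and> gb x \<le> 1"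
      "B = {x \<in> topspace X. gb x = 0}" using H zero_set_real by metis
    have c: "continuous_map X euclideanreal (\<lambda>x. ga x - gb x)"
      using ga gb by (intro continuous_intros) auto
    obtain Z y where Z: "Lindelof_subset X Z" "\<And>x. x \<in> topspace X \<Longrightarrow> x \<notin> Z \<Longrightarrow> ga x - gb x = y"
      by (rule EC_D[OF assms False c], blast)
    show ?thesis
    proof (cases "0 \<le> y")
      case True
      have "A \<subseteq> Z"
      proof
        fix x assume x: "x \<in> A"
        then have "x \<in> topspace X" "ga x = 0" "x \<notin> B" using ga H by auto
        then have "gb x > 0" using gb by force
        then show "x \<in> Z" using Z(2)[of x] True \<open>x \<in> topspace X\<close> \<open>ga x = 0\<close> by force
      qed
      then show ?thesis using Lsub_closed_subset[OF Z(1)] zero_set_closed H by blast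
    next
      case False
      have "B \<subseteq> Z"
      proof
        fix x assume x: "x \<in> B"
        then have "x \<in> topspace X" "gb x = 0" "x \<notin> A" using gb H by auto
        then have "ga x > 0" using ga by force
        then show "x \<in> Z" using Z(2)[of x] False \<open>x \<in> topspace X\<close> \<open>gb x = 0\<close> by force
      qed
      then show ?thesis using Lsub_closed_subset[OF Z(1)] zero_set_closed H by blast
    qed
  qed
qed

lemma I0_imp_EC: assumes I0: "I0 X" shows "EC X euclideanreal"
proof (rule EC_I)
  assume nL: "\<not> Lindelof_space X"
  fix f assume f: "continuous_map X euclideanreal f"
  define L where "L a \<longleftrightarrow> Lindelof_subset X {x\<in>topspace X. f x \<le> a}" for a
  define R where "R b \<longleftrightarrow> Lindelof_subset X {x\<in>topspace X. b \<le> f x}" for b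
  have clL: "closedin X {x\<in>topspace X. f x \<le> a}" for a
    using closedin_continuous_map_preimage[OF f, of "{..a}"] by simp
  have clR: "closedin X {x\<in>topspace X. b \<le> f x}" for b
    using closedin_continuous_map_preimage[OF f, of "{b..}"] by simp
  have Lmono: "L a' " if "L a" "a' \<le> a" for a a'
  proof -
    have s: "{x\<in>topspace X. f x \<le> a'} \<subseteq> {x\<in>topspace X. f x \<le> a}" using that(2) by auto
    show ?thesis using Lsub_closed_subset[OF _ clL s] that(1) unfolding L_def by blast
  qed
  have Rmono: "R b'" if "R b" "b \<le> b'" for b b'
  proof -
    have s: "{x\<in>topspace X. b' \<le> f x} \<subseteq> {x\<in>topspace X. b \<le> f x}" using that(2) by auto
    show ?thesis using Lsub_closed_subset[OF _ clR s] that(1) unfolding R_def by blast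
  qed
  have zL: "zero_set X {x\<in>topspace X. f x \<le> a}" for a
  proof -
    have "zero_set X {x\<in>topspace X. min 1 (max 0 (f x - a)) = 0}"
      by (rule zero_setI) (use f in \<open>intro continuous_intros, auto\<close>)
    moreover have "{x\<in>topspace X. min 1 (max 0 (f x - a)) = 0} = {x\<in>topspace X. f x \<le> a}"
      by (auto simp: min_def max_def)
    ultimately show ?thesis by simp
  qed
  have zR: "zero_set X {x\<in>topspace X. b \<le> f x}" for b
  proof -
    have "zero_set X {x\<in>topspace X. min 1 (max 0 (b - f x)) = 0}"
      by (rule zero_setI) (use f in \<open>intro continuous_intros, auto\<close>)
    moreover have "{x\<in>topspace X. min 1 (max 0 (b - f x)) = 0} = {x\<in>topspace X. b \<le> f x}"
      by (auto simp: min_def max_def)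
    ultimately show ?thesis by simp
  qed
  have LR: "L a \<or> R b" if "a < b" for a b
    using I0 zL[of a] zR[of b] that unfolding I0_def L_def R_def by fastforce
  have "\<exists>n::nat. \<not> L (real n)"
  proof (rule ccontr)
    assume "\<not> ?thesis"
    then have "Lindelof_subset X (\<Union>n\<in>UNIV. {x\<in>topspace X. f x \<le> real n})"
      by (intro Lsub_UN) (auto simp: L_def)
    moreover have "topspace X \<subseteq> (\<Union>n\<in>UNIV. {x\<in>topspace X. f x \<le> real n})"
      using real_arch_simple by blast
    ultimately show False using Lspace_if_covered nL by blast
  qed
  then obtain N :: nat where N: "\<not> L (real N)" by blast
  have "\<exists>n::nat. \<not> R (- real n)"
  proof (rule ccontr)
    assume "\<not> ?thesis"
    then have "Lindelof_subset X (\<Union>n\<in>UNIV. {x\<in>topspace X. - real n \<le> f x})"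
      by (intro Lsub_UN) (auto simp: R_def)
    moreover have "topspace X \<subseteq> (\<Union>n\<in>UNIV. {x\<in>topspace X. - real n \<le> f x})"
    proof
      fix x assume "x \<in> topspace X"
      obtain n :: nat where "- f x \<le> real n" using real_arch_simple by blast
      then have "- real n \<le> f x" by linarith
      then show "x \<in> (\<Union>n\<in>UNIV. {x\<in>topspace X. - real n \<le> f x})" using \<open>x \<in> topspace X\<close>
        by (intro UN_I[of n]) auto
    qed
    ultimately show False using Lspace_if_covered nL by blast
  qed
  then obtain M :: nat where M: "\<not> R (- real M)" by blast
  have S_ne: "L (- real M - 1)" using LR[of "- real M - 1" "- real M"] M by auto
  have S_bdd: "a < real N" if "L a" for a
    using Lmono[OF that, of "real N"] N by force
  define y where "y = Sup {a. L a}"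
  have ne: "{a. L a} \<noteq> {}" using S_ne by blast
  have bdd: "bdd_above {a. L a}" by (rule bdd_aboveI[of _ "real N"]) (use S_bdd in force)
  have below: "L a" if "a < y" for a
  proof -
    obtain s where "L s" "a < s" using \<open>a < y\<close> less_cSup_iff[OF ne bdd] unfolding y_def by auto
    then show ?thesis using Lmono by auto
  qed
  have above: "R b" if "y < b" for b
  proof -
    have "\<not> L ((y + b) / 2)"
    proof
      assume "L ((y + b) / 2)"
      then have "(y + b) / 2 \<le> y" unfolding y_def by (intro cSup_upper bdd) auto
      then show False using that by simp
    qed
    then show ?thesis using LR[of "(y + b) / 2" b] that by auto
  qed
  define Z where "Z = (\<Union>n\<in>UNIV. {x\<in>topspace X. f x \<le> y - inverse (real (Suc n))} \<union>
                                   {x\<in>topspace X. y + inverse (real (Suc n)) \<le> f x})"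
  have "Lindelof_subset X Z"
    unfolding Z_def
  proof (intro Lsub_UN Lsub_Un)
    fix n :: nat
    show "Lindelof_subset X {x\<in>topspace X. f x \<le> y - inverse (real (Suc n))}"
      using below[of "y - inverse (real (Suc n))"] unfolding L_def by simp
    show "Lindelof_subset X {x\<in>topspace X. y + inverse (real (Suc n)) \<le> f x}"
      using above[of "y + inverse (real (Suc n))"] unfolding R_def by simp
  qed simp
  moreover have "\<forall>x\<in>topspace X. x \<notin> Z \<longrightarrow> f x = y"
  proof (intro ballI impI)
    fix x assume x: "x \<in> topspace X" "x \<notin> Z"
    show "f x = y"
    proof (rule ccontr)
      assume "f x \<noteq> y"
      then have "0 < \<bar>f x - y\<bar>" by simp
      then obtain n where n: "inverse (real (Suc n)) < \<bar>f x - y\<bar>" using reals_Archimedean by blast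
      then have "f x \<le> y - inverse (real (Suc n)) \<or> y + inverse (real (Suc n)) \<le> f x"
        by (cases "f x \<le> y") (auto simp: abs_if split: if_splits)
      then have "x \<in> Z" unfolding Z_def using x(1) by (intro UN_I[of n]) auto
      then show False using x(2) by simp
    qed
  qed
  ultimately show "\<exists>Z y. Lindelof_subset X Z \<and> (\<forall>x\<in>topspace X. x \<notin> Z \<longrightarrow> f x = y)" by blast
qed

lemma EC_imp_zsm: assumes "EC X euclideanreal" shows "zero_sets_meet X"
  unfolding zero_sets_meet_def
proof (intro allI impI notI)
  fix A B assume H: "zero_set X A \<and> zero_set X B \<and> \<not> Lindelof_subset X A \<and> \<not> Lindelof_subset X B"
    and C: "Lindelof_subset X (A \<inter> B)"
  show False
  proof (cases "Lindelof_space X")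
    case True then show ?thesis using Lsub_closed_space zero_set_closed H by blast
  next
    case False
    obtain ga where ga: "continuous_map X euclideanreal ga" "\<And>x. x \<in> topspace X \<Longrightarrow> 0 \<le> ga x \<and> ga x \<le> 1"
      "A = {x \<in> topspace X. ga x = 0}" using H zero_set_real by metis
    obtain gb where gb: "continuous_map X euclideanreal gb" "\<And>x. x \<in> topspace X \<Longrightarrow> 0 \<le> gb x \<and> gb x \<le> 1"
      "B = {x \<in> topspace X. gb x = 0}" using H zero_set_real by metis
    obtain Za a where Za: "Lindelof_subset X Za" "\<And>x. x \<in> topspace X \<Longrightarrow> x \<notin> Za \<Longrightarrow> ga x = a"
      by (rule EC_D[OF assms False ga(1)], blast)
    obtain Zb b where Zb: "Lindelof_subset X Zb" "\<And>x. x \<in> topspace X \<Longrightarrow> x \<notin> Zb \<Longrightarrow> gb x = b"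
      by (rule EC_D[OF assms False gb(1)], blast)
    have a0: "a = 0"
    proof (rule ccontr)
      assume "a \<noteq> 0"
      then have "A \<subseteq> Za" using Za(2) ga(3) by auto
      then show False using Lsub_closed_subset[OF Za(1)] zero_set_closed H by blast
    qed
    have b0: "b = 0"
    proof (rule ccontr)
      assume "b \<noteq> 0"
      then have "B \<subseteq> Zb" using Zb(2) gb(3) by auto
      then show False using Lsub_closed_subset[OF Zb(1)] zero_set_closed H by blast
    qed
    have "topspace X \<subseteq> Za \<union> Zb \<union> (A \<inter> B)"
      using Za(2) Zb(2) ga(3) gb(3) a0 b0 by auto
    moreover have "Lindelof_subset X (Za \<union> Zb \<union> (A \<inter> B))"
      using Za(1) Zb(1) C by (intro Lsub_Un)
    ultimately show False using Lspace_if_covered False by blast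
  qed
qed

lemma zsm_imp_I0: assumes "zero_sets_meet X" shows "I0 X"
  unfolding I0_def
proof (intro allI impI)
  fix A B assume H: "zero_set X A \<and> zero_set X B \<and> A \<inter> B = {}"
  show "Lindelof_subset X A \<or> Lindelof_subset X B"
  proof (rule ccontr)
    assume "\<not> (Lindelof_subset X A \<or> Lindelof_subset X B)"
    then have "\<not> Lindelof_subset X (A \<inter> B)" using assms H unfolding zero_sets_meet_def by blast
    then show False using H Lsub_empty[of X] by simp
  qed
qed

lemma csm_imp_IC: assumes "closed_sets_meet X" shows "IC X"
  unfolding IC_def
proof (intro allI impI)
  fix A B assume H: "closedin X A \<and> closedin X B \<and> A \<inter> B = {}"
  show "Lindelof_subset X A \<or> Lindelof_subset X B"
  proof (rule ccontr)
    assume "\<not> (Lindelof_subset X A \<or> Lindelof_subset X B)"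
    then have "\<not> Lindelof_subset X (A \<inter> B)" using assms H unfolding closed_sets_meet_def by blast
    then show False using H Lsub_empty[of X] by simp
  qed
qed

lemma csm_imp_zsm: assumes "closed_sets_meet X" shows "zero_sets_meet X"
  unfolding zero_sets_meet_def
proof (intro allI impI)
  fix A B assume "zero_set X A \<and> zero_set X B \<and> \<not> Lindelof_subset X A \<and> \<not> Lindelof_subset X B"
  then show "\<not> Lindelof_subset X (A \<inter> B)"
    using assms zero_set_closed[of X A] zero_set_closed[of X B] unfolding closed_sets_meet_def by blast
qed

lemma shrink_lemma:
  assumes A: "closedin X A" "\<not> Lindelof_subset X A" and C: "Lindelof_subset X C" "C \<subseteq> A"
  shows "\<exists>U. openin X U \<and> C \<subseteq> U \<and> \<not> Lindelof_subset X (A - U)"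
proof -
  have As: "A \<subseteq> topspace X" using A closedin_subset by blast
  obtain \<U> where U: "\<And>U. U \<in> \<U> \<Longrightarrow> openin X U" "A \<subseteq> \<Union>\<U>"
    and nocount: "\<And>V. countable V \<Longrightarrow> V \<subseteq> \<U> \<Longrightarrow> \<not> A \<subseteq> \<Union>V"
  proof -
    have "\<not> (\<forall>\<U>. (\<forall>U\<in>\<U>. openin X U) \<and> A \<subseteq> \<Union>\<U> \<longrightarrow> (\<exists>V. countable V \<and> V \<subseteq> \<U> \<and> A \<subseteq> \<Union>V))"
      using A(2) Lindelof_space_subtopology_subset[OF As] As unfolding Lindelof_subset_def by simp
    then obtain \<U> where a: "\<forall>U\<in>\<U>. openin X U" "A \<subseteq> \<Union>\<U>" and b: "\<not> (\<exists>V. countable V \<and> V \<subseteq> \<U> \<and> A \<subseteq> \<Union>V)"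
      by blast
    show ?thesis
    proof (rule that)
      show "\<And>U. U \<in> \<U> \<Longrightarrow> openin X U" using a(1) by blast
      show "A \<subseteq> \<Union>\<U>" by (rule a(2))
      show "\<And>V. countable V \<Longrightarrow> V \<subseteq> \<U> \<Longrightarrow> \<not> A \<subseteq> \<Union>V" using b by blast
    qed
  qed
  have CU: "C \<subseteq> \<Union>\<U>" by (rule subset_trans[OF C(2) U(2)])
  have "\<exists>V. countable V \<and> V \<subseteq> \<U> \<and> C \<subseteq> \<Union>V"
    by (rule Lsub_cover[OF C(1) _ CU]) (rule U(1))
  then obtain V where V: "countable V" "V \<subseteq> \<U>" "C \<subseteq> \<Union>V"
    by (elim exE conjE)
  show ?thesis
  proof (intro exI conjI notI)
    show "openin X (\<Union>V)" using V(2) U(1) by (intro openin_Union) blast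
    show "C \<subseteq> \<Union>V" by fact
    assume L: "Lindelof_subset X (A - \<Union>V)"
    have AU: "A - \<Union>V \<subseteq> \<Union>\<U>" using U(2) by blast
    have "\<exists>V'. countable V' \<and> V' \<subseteq> \<U> \<and> A - \<Union>V \<subseteq> \<Union>V'"
      by (rule Lsub_cover[OF L _ AU]) (rule U(1))
    then obtain V' where V': "countable V'" "V' \<subseteq> \<U>" "A - \<Union>V \<subseteq> \<Union>V'"
      by (elim exE conjE)
    have "A \<subseteq> \<Union>(V \<union> V')" using V' by blast
    moreover have "countable (V \<union> V')" "V \<union> V' \<subseteq> \<U>" using V V' by auto
    ultimately show False using nocount[of "V \<union> V'"] by simp
  qed
qed

lemma IC_imp_csm: assumes "IC X" shows "closed_sets_meet X"
  unfolding closed_sets_meet_def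
proof (intro allI impI notI)
  fix A B assume H: "closedin X A \<and> closedin X B \<and> \<not> Lindelof_subset X A \<and> \<not> Lindelof_subset X B"
    and C: "Lindelof_subset X (A \<inter> B)"
  obtain U where U: "openin X U" "A \<inter> B \<subseteq> U" "\<not> Lindelof_subset X (A - U)"
    using shrink_lemma[of X A "A \<inter> B"] H C by blast
  obtain W where W: "openin X W" "A \<inter> B \<subseteq> W" "\<not> Lindelof_subset X (B - W)"
    using shrink_lemma[of X B "A \<inter> B"] H C by blast
  have "closedin X (A - U)" "closedin X (B - W)" using H U W by (auto intro: closedin_diff)
  moreover have "(A - U) \<inter> (B - W) = {}" using U W by blast
  ultimately have "Lindelof_subset X (A - U) \<or> Lindelof_subset X (B - W)"
    using assms unfolding IC_def by blast
  then show False using U(3) W(3) by simp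
qed

lemma IC_imp_I0: assumes "IC X" shows "I0 X"
  unfolding I0_def
proof (intro allI impI)
  fix A B assume "zero_set X A \<and> zero_set X B \<and> A \<inter> B = {}"
  then show "Lindelof_subset X A \<or> Lindelof_subset X B"
    using assms zero_set_closed[of X A] zero_set_closed[of X B] unfolding IC_def by blast
qed

lemma normal_I0_imp_IC: assumes N: "normal_space X" and I: "I0 X" shows "IC X"
  unfolding IC_def
proof (intro allI impI)
  fix A B assume H: "closedin X A \<and> closedin X B \<and> A \<inter> B = {}"
  have cA: "closedin X A" and cB: "closedin X B" and d: "disjnt A B" using H by (auto simp: disjnt_def)
  have "\<exists>g. continuous_map X (top_of_set {0..1::real}) g \<and> g ` A \<subseteq> {0} \<and> g ` B \<subseteq> {1}"
    by (rule Urysohn_lemma[OF N cA cB d, of "0::real" 1]) auto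
  then obtain g :: "_ \<Rightarrow> real" where g: "continuous_map X (top_of_set {0..1}) g" "g ` A \<subseteq> {0}" "g ` B \<subseteq> {1}"
    by blast
  have g': "continuous_map X euclideanreal g" "\<And>x. x \<in> topspace X \<Longrightarrow> 0 \<le> g x \<and> g x \<le> 1"
    using g(1) unfolding continuous_map_in_subtopology by (auto simp: Pi_iff)
  have z1: "zero_set X {x \<in> topspace X. g x = 0}" by (rule zero_setI) (use g' in auto)
  have z2: "zero_set X {x \<in> topspace X. 1 - g x = 0}"
    by (rule zero_setI) (use g' in \<open>intro continuous_intros, auto\<close>)
  have "{x \<in> topspace X. g x = 0} \<inter> {x \<in> topspace X. 1 - g x = 0} = {}" by auto
  then have disj: "Lindelof_subset X {x \<in> topspace X. g x = 0} \<or> Lindelof_subset X {x \<in> topspace X. 1 - g x = 0}"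
    using I z1 z2 unfolding I0_def by blast
  have As: "A \<subseteq> topspace X" and Bs: "B \<subseteq> topspace X" using cA cB closedin_subset by auto
  have A0: "A \<subseteq> {x \<in> topspace X. g x = 0}" using As g(2) by auto
  have B1: "B \<subseteq> {x \<in> topspace X. 1 - g x = 0}" using Bs g(3) by auto
  from disj show "Lindelof_subset X A \<or> Lindelof_subset X B"
  proof
    assume "Lindelof_subset X {x \<in> topspace X. g x = 0}"
    then show ?thesis using Lsub_closed_subset[OF _ cA A0] by simp
  next
    assume "Lindelof_subset X {x \<in> topspace X. 1 - g x = 0}"
    then show ?thesis using Lsub_closed_subset[OF _ cB B1] by simp
  qed
qed


lemma countable_hit:
  fixes m :: "'b metric"
  assumes f: "continuous_map X (mtopology_of m) f" and Z: "Lindelof_subset X Z"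
    and r: "r > 0" and D: "D \<subseteq> mspace m"
    and sep: "\<And>a b. a \<in> D \<Longrightarrow> b \<in> D \<Longrightarrow> a \<noteq> b \<Longrightarrow> r \<le> mdist m a b"
  shows "countable (D \<inter> f ` Z)"
proof -
  have Zs: "Z \<subseteq> topspace X" using Z unfolding Lindelof_subset_def by blast
  have fim: "f x \<in> mspace m" if "x \<in> topspace X" for x
    using continuous_map_image_subset_topspace[OF f] that by auto
  define B where "B z = {x \<in> topspace X. mdist m (f x) (f z) < r/2}" for z
  have Bo: "openin X (B z)" if "z \<in> topspace X" for z
  proof -
    have c: "continuous_map X euclideanreal (\<lambda>x. mdist m (f x) (f z))"
      by (rule continuous_map_mdist[OF f]) (simp add: fim that)
    show ?thesis unfolding B_def
      using openin_continuous_map_preimage[OF c, of "{..<r/2}"] by simp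
  qed
  have cover: "Z \<subseteq> \<Union>(B ` Z)"
  proof
    fix z assume z: "z \<in> Z"
    then have fz: "f z \<in> mspace m" using Zs fim by blast
    then have "mdist m (f z) (f z) = 0" by simp
    then have "z \<in> B z" unfolding B_def using Zs z r by auto
    then show "z \<in> \<Union>(B ` Z)" using z by blast
  qed
  have "\<exists>V. countable V \<and> V \<subseteq> B ` Z \<and> Z \<subseteq> \<Union>V"
    by (rule Lsub_cover[OF Z _ cover]) (use Bo Zs in blast)
  then obtain V where V: "countable V" "V \<subseteq> B ` Z" "Z \<subseteq> \<Union>V" by (elim exE conjE)
  then obtain C where C: "countable C" "C \<subseteq> Z" "V = B ` C"
    using countable_subset_image[of V B Z] by blast
  have ex: "\<exists>c. c \<in> C \<and> mdist m d (f c) < r/2" if dd: "d \<in> D \<inter> f ` Z" for d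
  proof -
    obtain z where z: "z \<in> Z" "d = f z" using dd by blast
    then obtain c where "c \<in> C" "z \<in> B c" using V C by blast
    then show ?thesis unfolding B_def using z by (auto simp: mdist_commute)
  qed
  define k where "k d = (SOME c. c \<in> C \<and> mdist m d (f c) < r/2)" for d
  have k: "k d \<in> C" "mdist m d (f (k d)) < r/2" if "d \<in> D \<inter> f ` Z" for d
    using someI_ex[OF ex[OF that]] unfolding k_def by auto
  have "inj_on k (D \<inter> f ` Z)"
  proof (rule inj_onI)
    fix a b assume a: "a \<in> D \<inter> f ` Z" and b: "b \<in> D \<inter> f ` Z" and eq: "k a = k b"
    show "a = b"
    proof (rule ccontr)
      assume ne: "a \<noteq> b"
      have "k a \<in> topspace X" using k(1)[OF a] C Zs by blast
      then have fk: "f (k a) \<in> mspace m" by (rule fim)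
      have "mdist m a b \<le> mdist m a (f (k a)) + mdist m (f (k a)) b"
        using a b D fk by (intro mdist_triangle) auto
      also have "\<dots> < r/2 + r/2"
        using k(2)[OF a] k(2)[OF b] eq by (simp add: mdist_commute add_strict_mono)
      finally have "mdist m a b < r" by simp
      then show False using sep[of a b] a b ne by auto
    qed
  qed
  moreover have "countable (k ` (D \<inter> f ` Z))"
    using k(1) C(1) by (meson countable_subset image_subsetI)
  ultimately show ?thesis using countable_image_inj_on by blast
qed

lemma split_uncountable:
  assumes "uncountable D"
  obtains D1 D2 where "D1 \<subseteq> D" "D2 \<subseteq> D" "D1 \<inter> D2 = {}" "uncountable D1" "uncountable D2"
proof -
  have inf: "\<not> finite D" using assms countable_finite by blast
  obtain g where g: "bij_betw g (D <+> D) D"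
    using card_of_ordIso[of "D <+> D" D] card_of_Plus_infinite1[OF inf card_of_mono1[OF subset_refl]] by blast
  then have inj: "inj_on g (D <+> D)" and im: "g ` (D <+> D) = D" by (auto simp: bij_betw_def)
  define D1 where "D1 = g ` (Inl ` D)"
  define D2 where "D2 = g ` (Inr ` D)"
  have s1: "Inl ` D \<subseteq> D <+> D" and s2: "Inr ` D \<subseteq> D <+> D" by auto
  have unc: "uncountable (g ` (h ` D))" if "h ` D \<subseteq> D <+> D" "inj h" for h :: "'a \<Rightarrow> 'a + 'a"
  proof
    assume "countable (g ` (h ` D))"
    then have "countable (h ` D)"
      using countable_image_inj_on inj_on_subset[OF inj that(1)] by blast
    then have "countable D" using countable_image_inj_on[of h D] that(2) inj_on_subset by blast
    then show False using assms by simp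
  qed
  show ?thesis
  proof (rule that[of D1 D2])
    show "D1 \<subseteq> D" unfolding D1_def using s1 im by blast
    show "D2 \<subseteq> D" unfolding D2_def using s2 im by blast
    show "D1 \<inter> D2 = {}" unfolding D1_def D2_def
    proof safe
      fix a b assume a: "a \<in> D" and b: "b \<in> D" and eq: "g (Inl a) = g (Inr b)"
      have "Inl a = Inr b" using inj_onD[OF inj eq] a b by auto
      then show "g (Inl a) \<in> {}" by simp
    qed
    show "uncountable D1" unfolding D1_def by (rule unc[OF s1]) (simp add: inj_def)
    show "uncountable D2" unfolding D2_def by (rule unc[OF s2]) (simp add: inj_def)
  qed
qed

lemma min_le_aux: "(a::real) \<le> b + c \<Longrightarrow> 0 \<le> c \<Longrightarrow> min 1 a \<le> min 1 b + c"
  by (simp add: min_def)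

definition hfun :: "'b metric \<Rightarrow> 'b set \<Rightarrow> 'b \<Rightarrow> real" where
  "hfun m S z = Inf ((\<lambda>d. min 1 (mdist m z d)) ` S)"

lemma hfun_bounds:
  assumes "S \<noteq> {}" shows "0 \<le> hfun m S z" "hfun m S z \<le> 1"
proof -
  show "0 \<le> hfun m S z" unfolding hfun_def
    by (rule cInf_greatest) (use assms in auto)
  obtain d where d: "d \<in> S" using assms by blast
  have "hfun m S z \<le> min 1 (mdist m z d)" unfolding hfun_def
    by (rule cInf_lower) (use d in \<open>auto intro!: bdd_belowI[of _ 0]\<close>)
  then show "hfun m S z \<le> 1" by simp
qed

lemma hfun_zero: assumes "d \<in> S" "d \<in> mspace m" shows "hfun m S d = 0"
proof -
  have "hfun m S d \<le> min 1 (mdist m d d)" unfolding hfun_def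
    by (rule cInf_lower) (use assms in \<open>auto intro!: bdd_belowI[of _ 0]\<close>)
  moreover have "mdist m d d = 0" using assms by simp
  ultimately have "hfun m S d \<le> 0" by simp
  moreover have "S \<noteq> {}" using assms by blast
  then have "0 \<le> hfun m S d" by (rule hfun_bounds(1))
  ultimately show ?thesis by simp
qed

lemma hfun_small:
  assumes "S \<noteq> {}" "hfun m S z < e" "e \<le> 1"
  shows "\<exists>d\<in>S. mdist m z d < e"
proof -
  obtain d where "d \<in> S" "min 1 (mdist m z d) < e"
    using cInf_lessD[of "(\<lambda>d. min 1 (mdist m z d)) ` S" e] assms unfolding hfun_def by auto
  then show ?thesis using assms(3) by (auto simp: min_def split: if_splits)
qed

lemma hfun_lip1:
  assumes "S \<noteq> {}" "z \<in> mspace m" "z' \<in> mspace m" "S \<subseteq> mspace m"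
  shows "hfun m S z \<le> hfun m S z' + mdist m z z'"
proof -
  have "hfun m S z - mdist m z z' \<le> hfun m S z'"
    unfolding hfun_def
  proof (rule cInf_greatest)
    show "(\<lambda>d. min 1 (mdist m z' d)) ` S \<noteq> {}" using assms by simp
    fix t assume "t \<in> (\<lambda>d. min 1 (mdist m z' d)) ` S"
    then obtain d where d: "d \<in> S" "t = min 1 (mdist m z' d)" by blast
    have "Inf ((\<lambda>d. min 1 (mdist m z d)) ` S) \<le> min 1 (mdist m z d)"
      by (rule cInf_lower) (use d in \<open>auto intro!: bdd_belowI[of _ 0]\<close>)
    moreover have "mdist m z d \<le> mdist m z z' + mdist m z' d"
      using assms d by (intro mdist_triangle) auto
    then have "min 1 (mdist m z d) \<le> min 1 (mdist m z' d) + mdist m z z'"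
      by (intro min_le_aux) (auto simp: add.commute)
    ultimately show "Inf ((\<lambda>d. min 1 (mdist m z d)) ` S) - mdist m z z' \<le> t"
      using d(2) by linarith
  qed
  then show ?thesis by simp
qed

lemma hfun_cont:
  assumes "S \<noteq> {}" "S \<subseteq> mspace m"
  shows "continuous_map (mtopology_of m) euclideanreal (hfun m S)"
proof -
  have "Lipschitz_continuous_map m euclidean_metric (hfun m S)"
    unfolding Lipschitz_continuous_map_def
  proof (intro conjI exI ballI)
    show "hfun m S \<in> mspace m \<rightarrow> mspace euclidean_metric" by simp
    fix x y assume xy: "x \<in> mspace m" "y \<in> mspace m"
    have "hfun m S x \<le> hfun m S y + mdist m x y" by (rule hfun_lip1) (use assms xy in auto)
    moreover have "hfun m S y \<le> hfun m S x + mdist m y x" by (rule hfun_lip1) (use assms xy in auto)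
    ultimately show "mdist euclidean_metric (hfun m S x) (hfun m S y) \<le> 1 * mdist m x y"
      by (simp add: dist_real_def mdist_commute abs_le_iff)
  qed
  from Lipschitz_continuous_imp_continuous_map[OF this] show ?thesis by simp
qed



lemma EC_R_imp_EC_metric:
  fixes m :: "'b metric"
  assumes EC: "EC X euclideanreal" shows "EC X (mtopology_of m)"
proof (rule EC_I)
  assume nL: "\<not> Lindelof_space X"
  fix f assume f: "continuous_map X (mtopology_of m) f"
  have I0: "I0 X" by (rule EC_imp_I0[OF EC])
  have fim: "f x \<in> mspace m" if "x \<in> topspace X" for x
    using continuous_map_image_subset_topspace[OF f] that by auto
  have ne: "topspace X - W \<noteq> {}" if "Lindelof_subset X W" for W
    using Lspace_if_covered[OF that] nL by blast
  have phi: "\<exists>Z c. Lindelof_subset X Z \<and> (\<forall>x\<in>topspace X. x \<notin> Z \<longrightarrow> mdist m (f x) y = c)"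
    if y: "y \<in> mspace m" for y
  proof -
    have c: "continuous_map X euclideanreal (\<lambda>x. mdist m (f x) y)"
      by (rule continuous_map_mdist[OF f]) (simp add: y)
    obtain Z c where "Lindelof_subset X Z" "\<And>x. x \<in> topspace X \<Longrightarrow> x \<notin> Z \<Longrightarrow> mdist m (f x) y = c"
      by (rule EC_D[OF EC nL c], blast)
    then show ?thesis by blast
  qed
  have "\<forall>y\<in>mspace m. \<exists>Z c. Lindelof_subset X Z \<and> (\<forall>x\<in>topspace X. x \<notin> Z \<longrightarrow> mdist m (f x) y = c)"
    using phi by blast
  from bchoice[OF this] obtain Zf where
    Zf0: "\<forall>y\<in>mspace m. \<exists>c. Lindelof_subset X (Zf y) \<and> (\<forall>x\<in>topspace X. x \<notin> Zf y \<longrightarrow> mdist m (f x) y = c)"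
    by (elim exE)
  from bchoice[OF Zf0] obtain cf where
    Zf1: "\<forall>y\<in>mspace m. Lindelof_subset X (Zf y) \<and> (\<forall>x\<in>topspace X. x \<notin> Zf y \<longrightarrow> mdist m (f x) y = cf y)"
    by (elim exE)
  have Zf: "Lindelof_subset X (Zf y)" if "y \<in> mspace m" for y
    using Zf1 that by blast
  have cf: "mdist m (f x) y = cf y" if "y \<in> mspace m" "x \<in> topspace X" "x \<notin> Zf y" for x y
    using Zf1 that by blast

  have small: "\<exists>y\<in>f ` topspace X. cf y < e" if e: "e > 0" for e
  proof (rule ccontr)
    assume "\<not> (\<exists>y\<in>f ` topspace X. cf y < e)"
    then have big: "e \<le> cf y" if "y \<in> f ` topspace X" for y using that by force
    define r where "r = min e 1"
    have r: "0 < r" "r \<le> e" "r \<le> 1" using e unfolding r_def by auto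
    define \<A> where "\<A> = {D. D \<subseteq> f ` topspace X \<and> (\<forall>a\<in>D. \<forall>b\<in>D. a \<noteq> b \<longrightarrow> r \<le> mdist m a b)}"
    have "\<forall>C\<in>chains \<A>. \<Union>C \<in> \<A>"
    proof
      fix C assume C: "C \<in> chains \<A>"
      have sub: "C \<subseteq> \<A>" using C by (rule chainsD2)
      have "\<Union>C \<subseteq> f ` topspace X" using sub unfolding \<A>_def by blast
      moreover have "r \<le> mdist m a b" if ab: "a \<in> \<Union>C" "b \<in> \<Union>C" "a \<noteq> b" for a b
      proof -
        obtain A1 where A1: "A1 \<in> C" "a \<in> A1" using ab by blast
        obtain A2 where A2: "A2 \<in> C" "b \<in> A2" using ab by blast
        have "A1 \<subseteq> A2 \<or> A2 \<subseteq> A1" by (rule chainsD[OF C A1(1) A2(1)])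
        moreover have "A1 \<in> \<A>" "A2 \<in> \<A>" using sub A1 A2 by auto
        ultimately show ?thesis using A1 A2 ab unfolding \<A>_def by blast
      qed
      ultimately show "\<Union>C \<in> \<A>" unfolding \<A>_def by blast
    qed
    then obtain D where D: "D \<in> \<A>" and maxD: "\<And>D'. D' \<in> \<A> \<Longrightarrow> D \<subseteq> D' \<Longrightarrow> D' = D"
      using Zorn_Lemma[of \<A>] by blast
    have Dsub: "D \<subseteq> f ` topspace X" using D unfolding \<A>_def by blast
    have Dm: "D \<subseteq> mspace m" using Dsub fim by blast
    have sepD: "r \<le> mdist m a b" if "a \<in> D" "b \<in> D" "a \<noteq> b" for a b
      using D that unfolding \<A>_def by blast
    have near: "\<exists>d\<in>D. mdist m y d < r" if y: "y \<in> f ` topspace X" for y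
    proof (rule ccontr)
      assume "\<not> (\<exists>d\<in>D. mdist m y d < r)"
      then have far: "r \<le> mdist m y d" if "d \<in> D" for d using that by force
      have ym: "y \<in> mspace m" using y fim by blast
      have yD: "y \<notin> D"
      proof
        assume "y \<in> D"
        then have "r \<le> mdist m y y" by (rule far)
        moreover have "mdist m y y = 0" using ym by simp
        ultimately show False using r by simp
      qed
      have "insert y D \<in> \<A>"
        unfolding \<A>_def
      proof (intro CollectI conjI ballI impI)
        show "insert y D \<subseteq> f ` topspace X" using y Dsub by blast
        fix a b assume a: "a \<in> insert y D" and b: "b \<in> insert y D" and ab: "a \<noteq> b"
        show "r \<le> mdist m a b"
        proof (cases "a = y")
          case True
          then have "b \<in> D" using b ab by blast
          then show ?thesis using far True by blast
        next
          case False
          then have aD: "a \<in> D" using a by blast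
          show ?thesis
          proof (cases "b = y")
            case True
            then show ?thesis using far[OF aD] by (simp add: mdist_commute)
          next
            case False
            then have "b \<in> D" using b by blast
            then show ?thesis using sepD aD ab by blast
          qed
        qed
      qed
      then have "insert y D = D" using maxD by blast
      then show False using yD by blast
    qed
    have cover: "topspace X \<subseteq> (\<Union>d\<in>D. Zf d)"
    proof
      fix x assume x: "x \<in> topspace X"
      then obtain d where d: "d \<in> D" "mdist m (f x) d < r" using near by blast
      have dm: "d \<in> mspace m" using d Dm by blast
      have "e \<le> cf d" using big d Dsub by blast
      then have "x \<in> Zf d"
        using cf[OF dm x] d(2) r by force
      then show "x \<in> (\<Union>d\<in>D. Zf d)" using d by blast
    qed
    have "uncountable D"
    proof
      assume "countable D"
      then have "Lindelof_subset X (\<Union>d\<in>D. Zf d)" using Zf Dm by (intro Lsub_UN) auto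
      then show False using Lspace_if_covered cover nL by blast
    qed
    then obtain D1 D2 where D12: "D1 \<subseteq> D" "D2 \<subseteq> D" "D1 \<inter> D2 = {}" "uncountable D1" "uncountable D2"
      by (rule split_uncountable)
    have D1ne: "D1 \<noteq> {}" and D2ne: "D2 \<noteq> {}" using D12 by auto
    have D1m: "D1 \<subseteq> mspace m" and D2m: "D2 \<subseteq> mspace m" using D12 Dm by auto
    define A1 where "A1 = {x \<in> topspace X. hfun m D1 (f x) = 0}"
    define A2 where "A2 = {x \<in> topspace X. hfun m D2 (f x) = 0}"
    have zA1: "zero_set X A1" unfolding A1_def
    proof (rule zero_setI)
      show "continuous_map X euclideanreal (\<lambda>x. hfun m D1 (f x))"
        using continuous_map_compose[OF f hfun_cont[OF D1ne D1m]] by (simp add: o_def)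
      show "0 \<le> hfun m D1 (f x) \<and> hfun m D1 (f x) \<le> 1" for x
        using hfun_bounds[OF D1ne] by blast
    qed
    have zA2: "zero_set X A2" unfolding A2_def
    proof (rule zero_setI)
      show "continuous_map X euclideanreal (\<lambda>x. hfun m D2 (f x))"
        using continuous_map_compose[OF f hfun_cont[OF D2ne D2m]] by (simp add: o_def)
      show "0 \<le> hfun m D2 (f x) \<and> hfun m D2 (f x) \<le> 1" for x
        using hfun_bounds[OF D2ne] by blast
    qed
    have disj: "A1 \<inter> A2 = {}"
    proof (rule ccontr)
      assume "A1 \<inter> A2 \<noteq> {}"
      then obtain x where x: "x \<in> topspace X" "hfun m D1 (f x) = 0" "hfun m D2 (f x) = 0"
        unfolding A1_def A2_def by blast
      have r2: "r/2 \<le> 1" using r by simp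
      obtain d1 where d1: "d1 \<in> D1" "mdist m (f x) d1 < r/2"
        using hfun_small[where z="f x" and m=m, OF D1ne _ r2] x r by auto
      obtain d2 where d2: "d2 \<in> D2" "mdist m (f x) d2 < r/2"
        using hfun_small[where z="f x" and m=m, OF D2ne _ r2] x r by auto
      have "d1 \<noteq> d2" using d1 d2 D12(3) by blast
      moreover have "d1 \<in> D" "d2 \<in> D" using d1 d2 D12 by auto
      ultimately have "r \<le> mdist m d1 d2" by (rule sepD[rotated 2])
      moreover have "mdist m d1 d2 \<le> mdist m d1 (f x) + mdist m (f x) d2"
        using d1 d2 D1m D2m fim x by (intro mdist_triangle) auto
      ultimately show False using d1 d2 by (simp add: mdist_commute)
    qed
    have LA: "Lindelof_subset X A1 \<or> Lindelof_subset X A2"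
      using I0 zA1 zA2 disj unfolding I0_def by blast
    have key: "countable Di"
      if Di: "Di \<subseteq> D" "Di \<noteq> {}" "Di \<subseteq> mspace m" and LAi: "Lindelof_subset X {x \<in> topspace X. hfun m Di (f x) = 0}"
      for Di
    proof -
      have "countable (D \<inter> f ` {x \<in> topspace X. hfun m Di (f x) = 0})"
        by (rule countable_hit[OF f LAi r(1) Dm sepD])
      moreover have "Di \<subseteq> D \<inter> f ` {x \<in> topspace X. hfun m Di (f x) = 0}"
      proof
        fix d assume d: "d \<in> Di"
        then obtain x where x: "x \<in> topspace X" "d = f x" using Di Dsub by blast
        have "hfun m Di (f x) = 0" using hfun_zero[of d Di m] d Di x by auto
        then show "d \<in> D \<inter> f ` {x \<in> topspace X. hfun m Di (f x) = 0}" using d Di x by blast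
      qed
      ultimately show ?thesis by (rule countable_subset[rotated])
    qed
    from LA show False
    proof
      assume "Lindelof_subset X A1"
      then have "countable D1" using key[OF D12(1) D1ne D1m] unfolding A1_def by blast
      then show False using D12 by blast
    next
      assume "Lindelof_subset X A2"
      then have "countable D2" using key[OF D12(2) D2ne D2m] unfolding A2_def by blast
      then show False using D12 by blast
    qed
  qed

  have "\<forall>n::nat. \<exists>y. y \<in> f ` topspace X \<and> cf y < inverse (real (Suc n))"
    using small by simp
  then obtain ys where ys: "\<And>n. ys n \<in> f ` topspace X" "\<And>n. cf (ys n) < inverse (real (Suc n))"
    using choice[of "\<lambda>n y. y \<in> f ` topspace X \<and> cf y < inverse (real (Suc n))"] by blast
  have ysm: "ys n \<in> mspace m" for n using ys(1)[of n] fim by auto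
  define W where "W = (\<Union>n\<in>UNIV. Zf (ys n))"
  have LW: "Lindelof_subset X W" unfolding W_def using Zf ysm by (intro Lsub_UN) auto
  obtain q where q: "q \<in> topspace X" "q \<notin> W" using ne[OF LW] by blast
  have fq: "f q \<in> mspace m" using q fim by blast
  have dq: "mdist m (f q) (ys n) = cf (ys n)" for n
    using cf[OF ysm q(1)] q(2) unfolding W_def by blast
  have LW2: "Lindelof_subset X (W \<union> Zf (f q))" using LW Zf[OF fq] by (rule Lsub_Un)
  obtain x where x: "x \<in> topspace X" "x \<notin> W \<union> Zf (f q)" using ne[OF LW2] by blast
  have cq: "mdist m (f x) (f q) = cf (f q)" using cf[OF fq x(1)] x(2) by blast
  have dx: "mdist m (f x) (ys n) = cf (ys n)" for n
    using cf[OF ysm x(1)] x(2) unfolding W_def by blast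
  have bnd: "cf (f q) < 2 * inverse (real (Suc n))" for n
  proof -
    have "cf (f q) \<le> mdist m (f x) (ys n) + mdist m (ys n) (f q)"
      unfolding cq[symmetric] using fim[OF x(1)] ysm fq by (intro mdist_triangle)
    also have "\<dots> = 2 * cf (ys n)" using dx[of n] dq[of n] by (simp add: mdist_commute)
    also have "\<dots> < 2 * inverse (real (Suc n))" using ys(2)[of n] by simp
    finally show ?thesis .
  qed
  have c0: "cf (f q) = 0"
  proof (rule ccontr)
    assume "cf (f q) \<noteq> 0"
    moreover have "0 \<le> cf (f q)" using cq[symmetric] by simp
    ultimately have "0 < cf (f q) / 2" by simp
    then obtain n where "inverse (real (Suc n)) < cf (f q) / 2" using reals_Archimedean by blast
    then show False using bnd[of n] by simp
  qed
  have "\<forall>x\<in>topspace X. x \<notin> Zf (f q) \<longrightarrow> f x = f q"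
  proof (intro ballI impI)
    fix x assume x: "x \<in> topspace X" "x \<notin> Zf (f q)"
    have "mdist m (f x) (f q) = 0" using cf[OF fq x] c0 by simp
    then show "f x = f q" using fim[OF x(1)] fq by simp
  qed
  then show "\<exists>Z y. Lindelof_subset X Z \<and> (\<forall>x\<in>topspace X. x \<notin> Z \<longrightarrow> f x = y)"
    using Zf[OF fq] by blast
qed


theorem theorem3p3:
  fixes X :: "'a topology"
  assumes "Hausdorff_space X"
  shows "(EC X euclideanreal \<longrightarrow> (\<forall>m :: 'b metric. EC X (mtopology_of m)))
       \<and> ((\<forall>m :: real metric. EC X (mtopology_of m)) \<longrightarrow> EC X euclideanreal)
       \<and> (EC X euclideanreal \<longleftrightarrow> I0 X)
       \<and> (zero_sets_meet X \<longrightarrow> I0 X)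
       \<and> (IC X \<longrightarrow> zero_sets_meet X)
       \<and> (IC X \<longleftrightarrow> closed_sets_meet X)
       \<and> (completely_regular_space X \<longrightarrow> (I0 X \<longleftrightarrow> zero_sets_meet X))
       \<and> (normal_space X \<longrightarrow> (I0 X \<longleftrightarrow> IC X))"
proof (intro conjI impI allI iffI)
  fix m :: "'b metric"
  assume "EC X euclideanreal"
  then show "EC X (mtopology_of m)" by (rule EC_R_imp_EC_metric)
next
  assume H: "\<forall>m :: real metric. EC X (mtopology_of m)"
  then have "EC X (mtopology_of (euclidean_metric :: real metric))" by blast
  then show "EC X euclideanreal" by simp
next
  assume "EC X euclideanreal" then show "I0 X" by (rule EC_imp_I0)
next
  assume "I0 X" then show "EC X euclideanreal" by (rule I0_imp_EC)
next
  assume "zero_sets_meet X" then show "I0 X" by (rule zsm_imp_I0)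
next
  assume "IC X" then show "zero_sets_meet X" by (intro csm_imp_zsm IC_imp_csm)
next
  assume "IC X" then show "closed_sets_meet X" by (rule IC_imp_csm)
next
  assume "closed_sets_meet X" then show "IC X" by (rule csm_imp_IC)
next
  assume "I0 X" then show "zero_sets_meet X" by (intro EC_imp_zsm I0_imp_EC)
next
  assume "zero_sets_meet X" then show "I0 X" by (rule zsm_imp_I0)
next
  assume "normal_space X" "I0 X" then show "IC X" by (rule normal_I0_imp_IC)
next
  assume "IC X" then show "I0 X" by (rule IC_imp_I0)
qed

end
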